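(* Let $n\ge 6$. All vertices $[\tau]$ of $\widetilde P_0(S_n)$ with $\tau$ a transposition lie in the same connected component $\widetilde\Delta_n$ of $\widetilde P_0(S_n)$, and $\widetilde\Delta_n$ contains vertices of each of the types $[1^{n-2},2]$, $[1^{n-5},2,3]$ and $[1^{n-3},3]$.
   Context: $\widetilde P_0(S_n)$: vertex set $\{[x]:x\in S_n\setminus\{\mathrm{id}\}\}$ with $[x]=\{y:\langle y\rangle=\langle x\rangle\}$, distinct $[x],[y]$ adjacent iff some representatives are one a positive power of the other. The type of $[\psi]$ is the partition of $n$ given by the orbit lengths of $\langle\psi\rangle$ on $\{1,\dots,n\}$, written with exponents denoting multiplicities. *)

theory Defs
  imports "HOL-Combinatorics.Combinatorics" "HOL-Library.Multiset"
begin

definition Sym :: "nat \<Rightarrow> (nat \<Rightarrow> nat) set" where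
  "Sym n = {p. p permutes {1..n}}"

text \<open>Cyclic subgroup generated by p (p has finite order, so nonnegative powers suffice).\<close>
definition cyc :: "(nat \<Rightarrow> nat) \<Rightarrow> (nat \<Rightarrow> nat) set" where
  "cyc p = range (\<lambda>k. p ^^ k)"

definition cls :: "nat \<Rightarrow> (nat \<Rightarrow> nat) \<Rightarrow> (nat \<Rightarrow> nat) set" where
  "cls n x = {y \<in> Sym n. cyc y = cyc x}"

definition verts :: "nat \<Rightarrow> (nat \<Rightarrow> nat) set set" where
  "verts n = {cls n x | x. x \<in> Sym n \<and> x \<noteq> id}"

definition adj :: "nat \<Rightarrow> (nat \<Rightarrow> nat) set \<Rightarrow> (nat \<Rightarrow> nat) set \<Rightarrow> bool" where
  "adj n A B \<longleftrightarrow> A \<in> verts n \<and> B \<in> verts n \<and> A \<noteq> B \<and>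
     (\<exists>x\<in>A. \<exists>y\<in>B. \<exists>k::nat. k > 0 \<and> (x = y ^^ k \<or> y = x ^^ k))"

definition component :: "nat \<Rightarrow> (nat \<Rightarrow> nat) set \<Rightarrow> (nat \<Rightarrow> nat) set set" where
  "component n V = {W. (adj n)\<^sup>*\<^sup>* V W}"

definition orbits_on :: "nat \<Rightarrow> (nat \<Rightarrow> nat) \<Rightarrow> nat set set" where
  "orbits_on n \<psi> = {{(\<psi> ^^ k) i | k. True} | i. i \<in> {1..n}}"

definition ptype :: "nat \<Rightarrow> (nat \<Rightarrow> nat) \<Rightarrow> nat multiset" where
  "ptype n \<psi> = image_mset card (mset_set (orbits_on n \<psi>))"

definition has_type :: "nat \<Rightarrow> (nat \<Rightarrow> nat) set \<Rightarrow> nat multiset \<Rightarrow> bool" where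
  "has_type n V T \<longleftrightarrow> (\<exists>\<psi>\<in>Sym n. V = cls n \<psi> \<and> ptype n \<psi> = T)"

definition is_transposition :: "nat \<Rightarrow> (nat \<Rightarrow> nat) \<Rightarrow> bool" where
  "is_transposition n \<tau> \<longleftrightarrow> (\<exists>a\<in>{1..n}. \<exists>b\<in>{1..n}. a \<noteq> b \<and> \<tau> = transpose a b)"

end

theory Submission
  imports Defs
begin

lemma funpow_fix: "f p = p \<Longrightarrow> (f ^^ k) p = p"
  by (induction k) auto

lemma self_cls: "x \<in> Sym n \<Longrightarrow> x \<in> cls n x"
  by (simp add: cls_def)

lemma cls_neq:
  assumes "x \<in> Sym n" "y p = p" "x p \<noteq> p"
  shows "cls n x \<noteq> cls n y"
proof
  assume "cls n x = cls n y"
  hence "x \<in> cls n y" using self_cls[OF assms(1)] by simp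
  hence "cyc x = cyc y" by (simp add: cls_def)
  moreover have "x \<in> cyc x" unfolding cyc_def by (rule range_eqI[of _ _ 1]) simp
  ultimately obtain k where "x = y ^^ k" by (auto simp: cyc_def)
  thus False using funpow_fix[of y p k] assms by simp
qed

lemma adj_intro: "A \<in> verts n \<Longrightarrow> B \<in> verts n \<Longrightarrow> A \<noteq> B \<Longrightarrow> x \<in> A \<Longrightarrow> y \<in> B
  \<Longrightarrow> 0 < k \<Longrightarrow> x = y ^^ k \<Longrightarrow> adj n A B"
  unfolding adj_def by auto

lemma adj_intro2: "A \<in> verts n \<Longrightarrow> B \<in> verts n \<Longrightarrow> A \<noteq> B \<Longrightarrow> x \<in> A \<Longrightarrow> y \<in> B
  \<Longrightarrow> 0 < k \<Longrightarrow> y = x ^^ k \<Longrightarrow> adj n A B"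
  unfolding adj_def by auto

lemma adj_sym: "adj n A B \<Longrightarrow> adj n B A"
  unfolding adj_def by (elim conjE bexE exE) (intro conjI bexI exI; (assumption | auto))

definition c3 :: "nat \<Rightarrow> nat \<Rightarrow> nat \<Rightarrow> nat \<Rightarrow> nat" where
  "c3 d e f = transpose d e \<circ> transpose e f"

lemma c3_vals:
  assumes "distinct [d,e,f]"
  shows "c3 d e f d = e" "c3 d e f e = f" "c3 d e f f = d" "p \<notin> {d,e,f} \<Longrightarrow> c3 d e f p = p"
  using assms by (auto simp: c3_def transpose_def)

lemma x_vals:
  assumes "distinct [a,b,d,e,f]"
  shows "(transpose a b \<circ> c3 d e f) a = b" "(transpose a b \<circ> c3 d e f) b = a"
    "(transpose a b \<circ> c3 d e f) d = e" "(transpose a b \<circ> c3 d e f) e = f"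
    "(transpose a b \<circ> c3 d e f) f = d"
    "p \<notin> {a,b,d,e,f} \<Longrightarrow> (transpose a b \<circ> c3 d e f) p = p"
  using assms c3_vals[of d e f] by auto

lemma pow_gen:
  assumes xa: "x a = b" and xb: "x b = a" and xd: "x d = e" and xe: "x e = f" and xf: "x f = d"
    and xp: "\<And>p. p \<notin> {a,b,d,e,f} \<Longrightarrow> x p = p"
    and dist: "distinct [a,b,d,e,f]"
  shows "(x ^^ 3) p = transpose a b p" "(x ^^ 4) p = c3 d e f p"
proof -
  have 3: "(x ^^ 3) p = x (x (x p))" and 4: "(x ^^ 4) p = x (x (x (x p)))"
    by (simp_all add: numeral_eq_Suc)
  note cv = c3_vals[of d e f]
  have "p = a \<or> p = b \<or> p = d \<or> p = e \<or> p = f \<or> p \<notin> {a,b,d,e,f}" by blast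
  then have "(x ^^ 3) p = transpose a b p \<and> (x ^^ 4) p = c3 d e f p"
  proof (elim disjE)
    assume "p = a" thus ?thesis unfolding 3 4 using xa xb dist cv by (auto simp: transpose_def)
  next
    assume "p = b" thus ?thesis unfolding 3 4 using xa xb dist cv by (auto simp: transpose_def)
  next
    assume "p = d" thus ?thesis unfolding 3 4 using xd xe xf dist cv by (auto simp: transpose_def)
  next
    assume "p = e" thus ?thesis unfolding 3 4 using xd xe xf dist cv by (auto simp: transpose_def)
  next
    assume "p = f" thus ?thesis unfolding 3 4 using xd xe xf dist cv by (auto simp: transpose_def)
  next
    assume h: "p \<notin> {a,b,d,e,f}" 
    hence "x p = p" by (rule xp)
    thus ?thesis unfolding 3 4 using h dist cv by (auto simp: transpose_def)
  qed
  thus "(x ^^ 3) p = transpose a b p" "(x ^^ 4) p = c3 d e f p" by simp_all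
qed

lemma pow3:
  assumes "distinct [a,b,d,e,f]"
  shows "(transpose a b \<circ> c3 d e f) ^^ 3 = transpose a b"
  by (rule ext, rule pow_gen(1)[OF x_vals[OF assms] assms])

lemma pow4:
  assumes "distinct [a,b,d,e,f]"
  shows "(transpose a b \<circ> c3 d e f) ^^ 4 = c3 d e f"
  by (rule ext, rule pow_gen(2)[OF x_vals[OF assms] assms])
lemma trans_Sym: "a \<in> {1..n} \<Longrightarrow> b \<in> {1..n} \<Longrightarrow> transpose a b \<in> Sym n"
  unfolding Sym_def by (simp add: permutes_swap_id)

lemma c3_Sym: "d \<in> {1..n} \<Longrightarrow> e \<in> {1..n} \<Longrightarrow> f \<in> {1..n} \<Longrightarrow> c3 d e f \<in> Sym n"
  unfolding Sym_def c3_def by (simp add: permutes_compose permutes_swap_id)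

lemma x_Sym: "a \<in> {1..n} \<Longrightarrow> b \<in> {1..n} \<Longrightarrow> d \<in> {1..n} \<Longrightarrow> e \<in> {1..n} \<Longrightarrow> f \<in> {1..n} \<Longrightarrow> transpose a b \<circ> c3 d e f \<in> Sym n"
  using trans_Sym[of a n b] c3_Sym[of d n e f] unfolding Sym_def by (simp add: permutes_compose)

lemma in_verts: "x \<in> Sym n \<Longrightarrow> x p \<noteq> p \<Longrightarrow> cls n x \<in> verts n"
  unfolding verts_def by (rule CollectI, rule exI[of _ x]) auto

lemma step:
  assumes "distinct [a,b,d,e,f]" "a \<in> {1..n}" "b \<in> {1..n}" "d \<in> {1..n}" "e \<in> {1..n}" "f \<in> {1..n}"
  shows "adj n (cls n (transpose a b)) (cls n (transpose a b \<circ> c3 d e f))"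
    "adj n (cls n (transpose a b \<circ> c3 d e f)) (cls n (c3 d e f))"
proof -
  let ?t = "transpose a b" and ?c = "c3 d e f" and ?x = "transpose a b \<circ> c3 d e f"
  have St: "?t \<in> Sym n" using assms trans_Sym by auto
  have Sc: "?c \<in> Sym n" using assms c3_Sym by auto
  have Sx: "?x \<in> Sym n" using assms x_Sym by auto
  have "?t a \<noteq> a" using assms by auto
  hence vt: "cls n ?t \<in> verts n" using in_verts[OF St] by blast
  have "?c d \<noteq> d" using assms by (auto simp: c3_def)
  hence vc: "cls n ?c \<in> verts n" using in_verts[OF Sc] by blast
  have "?x a \<noteq> a" using assms by (auto simp: c3_def)
  hence vx: "cls n ?x \<in> verts n" using in_verts[OF Sx] by blast
  have "?t d = d" "?x d \<noteq> d" using assms by (auto simp: c3_def)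
  hence n1: "cls n ?x \<noteq> cls n ?t" using cls_neq[OF Sx, of ?t d] by blast
  have "?c a = a" "?x a \<noteq> a" using assms by (auto simp: c3_def)
  hence n2: "cls n ?x \<noteq> cls n ?c" using cls_neq[OF Sx, of ?c a] by blast
  show "adj n (cls n ?t) (cls n ?x)"
    by (rule adj_intro[OF vt vx n1[symmetric] self_cls[OF St] self_cls[OF Sx] _ pow3[OF assms(1), symmetric]]) simp
  show "adj n (cls n ?x) (cls n ?c)"
    by (rule adj_intro2[OF vx vc n2 self_cls[OF Sx] self_cls[OF Sc] _ pow4[OF assms(1), symmetric]]) simp
qed

definition orb :: "(nat \<Rightarrow> nat) \<Rightarrow> nat \<Rightarrow> nat set" where
  "orb \<psi> i = {(\<psi> ^^ k) i | k. True}"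

lemma orbits_on_orb: "orbits_on n \<psi> = orb \<psi> ` {1..n}"
  unfolding orbits_on_def orb_def by blast

lemma funpow_fix': "f p = p \<Longrightarrow> (f ^^ k) p = p"
  by (induction k) auto

lemma orb_fix: "\<psi> i = i \<Longrightarrow> orb \<psi> i = {i}"
  unfolding orb_def using funpow_fix'[of \<psi> i] by auto

lemma orb_closed: assumes "\<And>x. x \<in> S \<Longrightarrow> \<psi> x \<in> S" "i \<in> S" shows "orb \<psi> i \<subseteq> S"
proof -
  have "(\<psi> ^^ k) i \<in> S" for k by (induction k) (use assms in auto)
  thus ?thesis unfolding orb_def by auto
qed

lemma orb_mem: "(\<psi> ^^ m) i \<in> orb \<psi> i"
  unfolding orb_def by blast

lemma orb_2: assumes "\<psi> i = j" "\<psi> j = i" shows "orb \<psi> i = {i, j}"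
proof
  show "orb \<psi> i \<subseteq> {i, j}" by (rule orb_closed) (use assms in auto)
  have "(\<psi> ^^ 0) i = i" "(\<psi> ^^ 1) i = j" using assms by auto
  thus "{i, j} \<subseteq> orb \<psi> i" using orb_mem[where \<psi>=\<psi> and m=0 and i=i] orb_mem[where \<psi>=\<psi> and m=1 and i=i] by simp
qed

lemma orb_3: assumes "\<psi> i = j" "\<psi> j = k" "\<psi> k = i" shows "orb \<psi> i = {i, j, k}"
proof
  show "orb \<psi> i \<subseteq> {i, j, k}" by (rule orb_closed) (use assms in auto)
  have "(\<psi> ^^ 0) i = i" "(\<psi> ^^ 1) i = j" "(\<psi> ^^ 2) i = k" using assms by (auto simp: numeral_eq_Suc)
  thus "{i, j, k} \<subseteq> orb \<psi> i" using orb_mem[where \<psi>=\<psi> and m=0 and i=i] orb_mem[where \<psi>=\<psi> and m=1 and i=i] orb_mem[where \<psi>=\<psi> and m=2 and i=i] by simp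
qed

lemma ptype_gen:
  assumes "orbits_on n \<psi> = P \<union> (\<lambda>i. {i}) ` F" "finite P" "finite F" "\<forall>A\<in>P. card A \<ge> 2"
  shows "ptype n \<psi> = image_mset card (mset_set P) + replicate_mset (card F) 1"
proof -
  have disj: "P \<inter> (\<lambda>i. {i}) ` F = {}" using assms(4) by fastforce
  have "image_mset card (mset_set ((\<lambda>i. {i}) ` F)) = image_mset card (image_mset (\<lambda>i. {i}) (mset_set F))"
    by (subst image_mset_mset_set) (auto simp: inj_on_def)
  also have "\<dots> = image_mset (\<lambda>_. 1) (mset_set F)" by (simp add: multiset.map_comp comp_def)
  also have "\<dots> = replicate_mset (card F) 1" by (simp add: image_mset_const_eq)
  finally have s: "image_mset card (mset_set ((\<lambda>i. {i}) ` F)) = replicate_mset (card F) 1" .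
  show ?thesis unfolding ptype_def assms(1)
    by (subst mset_set_Union) (use assms disj s in auto)
qed

lemma split_n: "m \<le> Suc n \<Longrightarrow> 1 \<le> m \<Longrightarrow> {1..n} = {1..<m} \<union> {m..n}"
  by auto

lemma orbits_split:
  assumes "m \<le> Suc n" "1 \<le> m" "\<And>i. i \<in> {m..n} \<Longrightarrow> \<psi> i = i"
  shows "orbits_on n \<psi> = orb \<psi> ` {1..<m} \<union> (\<lambda>i. {i}) ` {m..n}"
proof -
  have "orb \<psi> ` {m..n} = (\<lambda>i. {i}) ` {m..n}" using assms(3) orb_fix by (auto intro!: image_cong)
  thus ?thesis unfolding orbits_on_orb using split_n[OF assms(1,2)] by (metis image_Un)
qed


lemma avoid: assumes "length xs < n" shows "\<exists>d\<in>{1..n}. d \<notin> set xs"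
proof -
  have "card ({1..n} - set xs) \<ge> n - length xs"
    using diff_card_le_card_Diff[of "set xs" "{1..n}"] card_length[of xs] by simp
  hence "card ({1..n} - set xs) > 0" using assms by linarith
  hence "{1..n} - set xs \<noteq> {}" by (metis card.empty less_irrefl)
  thus ?thesis by blast
qed

lemma rt_sym: "(adj n)\<^sup>*\<^sup>* A B \<Longrightarrow> (adj n)\<^sup>*\<^sup>* B A"
proof (induction rule: rtranclp_induct)
  case base thus ?case by simp
next
  case (step y z)
  thus ?case using adj_sym converse_rtranclp_into_rtranclp by metis
qed

lemma share:
  assumes "distinct [a,b,c]" "a \<in> {1..n}" "b \<in> {1..n}" "c \<in> {1..n}" "n \<ge> 6"
  shows "(adj n)\<^sup>*\<^sup>* (cls n (transpose a b)) (cls n (transpose a c))"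
proof -
  obtain d where d: "d \<in> {1..n}" "d \<notin> set [a,b,c]" using avoid[of "[a,b,c]" n] assms by auto
  obtain e where e: "e \<in> {1..n}" "e \<notin> set [a,b,c,d]" using avoid[of "[a,b,c,d]" n] assms by auto
  obtain f where f: "f \<in> {1..n}" "f \<notin> set [a,b,c,d,e]" using avoid[of "[a,b,c,d,e]" n] assms by auto
  have D1: "distinct [a,b,d,e,f]" using assms d e f by auto
  have D2: "distinct [a,c,d,e,f]" using assms d e f by auto
  note s1 = step[OF D1 assms(2,3) d(1) e(1) f(1)]
  note s2 = step[OF D2 assms(2,4) d(1) e(1) f(1)]
  have "(adj n)\<^sup>*\<^sup>* (cls n (transpose a b)) (cls n (c3 d e f))"
    using s1 by (meson rtranclp.rtrancl_into_rtrancl rtranclp.rtrancl_refl)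
  moreover have "(adj n)\<^sup>*\<^sup>* (cls n (c3 d e f)) (cls n (transpose a c))"
    using s2 adj_sym by (meson converse_rtranclp_into_rtranclp rtranclp.rtrancl_refl)
  ultimately show ?thesis by (rule rtranclp_trans)
qed

lemma conn1:
  assumes "b \<in> {1..n}" "b \<noteq> 1" "n \<ge> 6"
  shows "(adj n)\<^sup>*\<^sup>* (cls n (transpose 1 2)) (cls n (transpose 1 b))"
proof (cases "b = 2")
  case True thus ?thesis by simp
next
  case False thus ?thesis using share[of 1 2 b n] assms by auto
qed

lemma conn:
  assumes "a \<in> {1..n}" "b \<in> {1..n}" "a \<noteq> b" "n \<ge> 6"
  shows "(adj n)\<^sup>*\<^sup>* (cls n (transpose 1 2)) (cls n (transpose a b))"
proof -
  consider "a = 1" | "b = 1" | "a \<noteq> 1" "b \<noteq> 1" by blast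
  thus ?thesis
  proof cases
    case 1 thus ?thesis using conn1[of b n] assms by auto
  next
    case 2 thus ?thesis using conn1[of a n] assms by (auto simp: transpose_commute)
  next
    case 3
    have "(adj n)\<^sup>*\<^sup>* (cls n (transpose 1 2)) (cls n (transpose 1 a))" using conn1[of a n] assms 3 by auto
    moreover have "(adj n)\<^sup>*\<^sup>* (cls n (transpose a 1)) (cls n (transpose a b))"
      using share[of a 1 b n] assms 3 by auto
    ultimately show ?thesis by (metis rtranclp_trans transpose_commute)
  qed
qed

theorem lemma7p4:
  fixes n :: nat
  assumes "n \<ge> 6"
  shows "\<exists>\<Delta>. (\<exists>V\<in>verts n. \<Delta> = component n V)
     \<and> (\<forall>\<tau>. is_transposition n \<tau> \<longrightarrow> cls n \<tau> \<in> \<Delta>)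
     \<and> (\<exists>V\<in>\<Delta>. has_type n V (replicate_mset (n - 2) 1 + {#2#}))
     \<and> (\<exists>V\<in>\<Delta>. has_type n V (replicate_mset (n - 5) 1 + {#2, 3#}))
     \<and> (\<exists>V\<in>\<Delta>. has_type n V (replicate_mset (n - 3) 1 + {#3#}))"
proof -
  let ?t = "transpose (1::nat) 2"
  let ?x = "transpose (1::nat) 2 \<circ> c3 3 4 5"
  let ?c = "c3 (1::nat) 2 3"
  let ?y = "transpose (4::nat) 5 \<circ> c3 1 2 3"
  let ?V = "cls n ?t"
  have n1: "(1::nat) \<in> {1..n}" "(2::nat) \<in> {1..n}" "(3::nat) \<in> {1..n}" "(4::nat) \<in> {1..n}" "(5::nat) \<in> {1..n}"
    using assms by auto
  have St: "?t \<in> Sym n" using trans_Sym n1 by blast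
  have "?t 1 \<noteq> 1" by simp
  hence V: "?V \<in> verts n" using in_verts[OF St] by blast
  have D1: "distinct [1::nat,2,3,4,5]" by simp
  have D2: "distinct [4::nat,5,1,2,3]" by simp
  note s1 = step[OF D1 n1]
  note s2 = step[OF D2 n1(4,5,1,2,3)]
  have T: "cls n \<tau> \<in> component n ?V" if "is_transposition n \<tau>" for \<tau>
    using that conn[OF _ _ _ assms] unfolding is_transposition_def component_def by auto
  have Sx: "?x \<in> Sym n" using x_Sym n1 by blast
  have Sc: "?c \<in> Sym n" using c3_Sym n1 by blast
  have Xin: "cls n ?x \<in> component n ?V" unfolding component_def mem_Collect_eq
    by (rule r_into_rtranclp[where r="adj n", OF s1(1)])
  have "(4::nat) \<in> {1..n} \<and> (5::nat) \<in> {1..n} \<and> (4::nat) \<noteq> 5 \<and> transpose 4 5 = transpose (4::nat) 5"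
    using n1 by simp
  hence "is_transposition n (transpose 4 5)" unfolding is_transposition_def by blast
  hence "(adj n)\<^sup>*\<^sup>* ?V (cls n (transpose 4 5))" using T unfolding component_def by blast
  hence Cin: "cls n ?c \<in> component n ?V" unfolding component_def mem_Collect_eq
    using s2 by (meson rtranclp.rtrancl_into_rtrancl)
  have o1: "orbits_on n ?t = {{1,2}} \<union> (\<lambda>i. {i}) ` {3..n}"
  proof -
    have "orbits_on n ?t = orb ?t ` {1..<3} \<union> (\<lambda>i. {i}) ` {3..n}"
      by (rule orbits_split) (use assms in auto)
    moreover have "{1..<3::nat} = {1,2}" by auto
    moreover have "orb ?t 1 = {1,2}" "orb ?t 2 = {1,2}" using orb_2[of ?t 1 2] orb_2[of ?t 2 1] by auto
    ultimately show ?thesis by simp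
  qed
  have p1: "ptype n ?t = replicate_mset (n - 2) 1 + {#2#}"
    using ptype_gen[OF o1] by (simp add: add.commute)
  note xv = x_vals[OF D1]
  have o2: "orbits_on n ?x = {{1,2},{3,4,5}} \<union> (\<lambda>i. {i}) ` {6..n}"
  proof -
    have "orbits_on n ?x = orb ?x ` {1..<6} \<union> (\<lambda>i. {i}) ` {6..n}"
      by (rule orbits_split) (use assms xv(6) in auto)
    moreover have "{1..<6::nat} = {1,2,3,4,5}" by auto
    moreover have "orb ?x 1 = {1,2}" "orb ?x 2 = {1,2}" using orb_2[of ?x 1 2] orb_2[of ?x 2 1] xv by auto
    moreover have "orb ?x 3 = {3,4,5}" "orb ?x 4 = {3,4,5}" "orb ?x 5 = {3,4,5}"
      using orb_3[of ?x 3 4 5] orb_3[of ?x 4 5 3] orb_3[of ?x 5 3 4] xv by auto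
    ultimately show ?thesis by (simp add: insert_commute)
  qed
  have ne: "{1::nat,2} \<noteq> {3,4,5}" by auto
  have "mset_set {{1::nat,2},{3,4,5}} = mset [{1,2},{3,4,5}]"
    using mset_set_set[of "[{1::nat,2},{3,4,5}]"] ne by simp
  hence "image_mset card (mset_set {{1::nat,2},{3,4,5}}) = {#2,3#}" by (simp add: numeral_eq_Suc)
  hence p2: "ptype n ?x = replicate_mset (n - 5) 1 + {#2,3#}"
    using ptype_gen[OF o2] by (simp add: add.commute)
  note cv = c3_vals[of 1 2 3]
  have o3: "orbits_on n ?c = {{1,2,3}} \<union> (\<lambda>i. {i}) ` {4..n}"
  proof -
    have "orbits_on n ?c = orb ?c ` {1..<4} \<union> (\<lambda>i. {i}) ` {4..n}"
      by (rule orbits_split) (use assms cv(4) in auto)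
    moreover have "{1..<4::nat} = {1,2,3}" by auto
    moreover have "orb ?c 1 = {1,2,3}" "orb ?c 2 = {1,2,3}" "orb ?c 3 = {1,2,3}"
      using orb_3[of ?c 1 2 3] orb_3[of ?c 2 3 1] orb_3[of ?c 3 1 2] cv by auto
    ultimately show ?thesis by (simp add: insert_commute)
  qed
  have p3: "ptype n ?c = replicate_mset (n - 3) 1 + {#3#}"
    using ptype_gen[OF o3] by (simp add: add.commute)
  show ?thesis
  proof (intro exI[of _ "component n ?V"] conjI allI impI)
    show "\<exists>V\<in>verts n. component n ?V = component n V" using V by blast
    show "cls n \<tau> \<in> component n ?V" if "is_transposition n \<tau>" for \<tau> using T that by blast
    show "\<exists>V\<in>component n ?V. has_type n V (replicate_mset (n - 2) 1 + {#2#})"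
      using St p1 unfolding has_type_def component_def by auto
    show "\<exists>V\<in>component n ?V. has_type n V (replicate_mset (n - 5) 1 + {#2, 3#})"
      using Sx p2 Xin unfolding has_type_def by blast
    show "\<exists>V\<in>component n ?V. has_type n V (replicate_mset (n - 3) 1 + {#3#})"
      using Sc p3 Cin unfolding has_type_def by blast
  qed
qed

end
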